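(* Let $p$ be a stochastic choice function on $X$ and $M\in\mathcal N$. (a) There exists an MSC $\langle Q,\nu\rangle$ rationalizing $p$ such that $Q(M)$ is pairwise comparable if and only if $p(\cdot,M)$ is bounded in a cycle over every pair $(i,j)$ of distinct elements of $M$. (b) There exists an MSC $\langle Q,\nu\rangle$ rationalizing $p$ such that $Q(M)$ is fully comparable if and only if $p(i,M)>0$ for all $i\in M$, $p(i,\{i,j\})>0$ for all $i,j\in M$, and $p(\cdot,M)$ is bounded in a cycle over every pair $(i,j)$ of distinct elements of $M$.
   Context: $X$ is a finite set of alternatives; a menu is a nonempty subset of $X$, and $\mathcal N$ denotes the set of all menus. A stochastic choice function is a map $p:X\times\mathcal N\to[0,1]$ with $\sum_{i\in M}p(i,M)=1$ and $p(i,M)=0$ for $i\notin M$; $p(\cdot,M)$ denotes the row vector $(p(i,M))_{i\in M}$. For $M\in\mathcal N$ and $i,j\in M$ let $\delta_{ij}(M)=p(i,M)\,p(j,\{i,j\})-p(i,\{i,j\})\,p(j,M)$. An MSC (Markov stochastic choice model) $\langle Q,\nu\rangle$ consists of, for every menu $M$, a matrix $Q(M)=(q_{ij}(M))_{i,j\in M}$ with nonnegative entries and a probability distribution $\nu_M$ on $M$, such that for all $M\in\mathcal N$ and distinct $i,j\in M$: (A1) $q_{ii}(M)=1-\sum_{k\neq i}q_{ik}(M)>0$; (A2) if $q_{ij}(\{i,j\})=0$ then $q_{ji}(\{i,j\})>0$; (A3) $q_{ij}(\{i,j\})\,q_{ji}(M)=q_{ji}(\{i,j\})\,q_{ij}(M)$.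 For a right stochastic matrix $Q$ on $M$ and a distribution $\nu$ on $M$ define $\rho(\nu,Q)=\lim_{\alpha\to0^+}\sum_{t\ge0}\alpha(1-\alpha)^t\nu Q^t$ (the limit exists and satisfies $\rho(\nu,Q)(I-Q)=0$). $p$ is rationalized by the MSC $\langle Q,\nu\rangle$ if $p(\cdot,M)=\rho(\nu_M,Q(M))$ for every $M\in\mathcal N$. $Q(M)$ is pairwise comparable if for all distinct $i,j\in M$, $q_{ij}(M)=0$ implies $q_{ji}(M)>0$; it is fully comparable if $q_{ij}(M)>0$ for all distinct $i,j\in M$. A cycle on a set $M'=\{i_1,\dots,i_n\}$ (distinct elements in some order) is the set of ordered pairs $\{(i_1,i_2),\dots,(i_{n-1},i_n),(i_n,i_1)\}$. $p(\cdot,M)$ is bounded in a cycle over the pair $(i,j)$ if either $\delta_{ij}(M)=0$, or there exist $M'\subseteq M$ and a cycle on $M'$ containing $(i,j)$ such that all $\delta_{kl}(M)$, $(k,l)$ in the cycle, are strictly positive, or all are strictly negative. *)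

theory Defs
  imports "HOL-Analysis.Analysis"
begin

definition menu :: "'a set \<Rightarrow> 'a set \<Rightarrow> bool" where
  "menu X M \<longleftrightarrow> M \<subseteq> X \<and> M \<noteq> {}"

definition stoch_choice :: "'a set \<Rightarrow> ('a \<Rightarrow> 'a set \<Rightarrow> real) \<Rightarrow> bool" where
  "stoch_choice X p \<longleftrightarrow>
     (\<forall>M. menu X M \<longrightarrow>
        (\<forall>i\<in>X. 0 \<le> p i M \<and> p i M \<le> 1) \<and>
        (\<Sum>i\<in>M. p i M) = 1 \<and>
        (\<forall>i\<in>X. i \<notin> M \<longrightarrow> p i M = 0))"

definition delta :: "('a \<Rightarrow> 'a set \<Rightarrow> real) \<Rightarrow> 'a set \<Rightarrow> 'a \<Rightarrow> 'a \<Rightarrow> real" where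
  "delta p M i j = p i M * p j {i, j} - p i {i, j} * p j M"

fun mat_pow :: "'a set \<Rightarrow> ('a \<Rightarrow> 'a \<Rightarrow> real) \<Rightarrow> nat \<Rightarrow> 'a \<Rightarrow> 'a \<Rightarrow> real" where
  "mat_pow M Q 0 i j = (if i = j then 1 else 0)"
| "mat_pow M Q (Suc t) i j = (\<Sum>k\<in>M. mat_pow M Q t i k * Q k j)"

definition vec_pow :: "'a set \<Rightarrow> ('a \<Rightarrow> real) \<Rightarrow> ('a \<Rightarrow> 'a \<Rightarrow> real) \<Rightarrow> nat \<Rightarrow> 'a \<Rightarrow> real" where
  "vec_pow M \<nu> Q t j = (\<Sum>i\<in>M. \<nu> i * mat_pow M Q t i j)"

definition rho_is :: "'a set \<Rightarrow> ('a \<Rightarrow> real) \<Rightarrow> ('a \<Rightarrow> 'a \<Rightarrow> real) \<Rightarrow> ('a \<Rightarrow> real) \<Rightarrow> bool" where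
  "rho_is M \<nu> Q r \<longleftrightarrow>
     (\<forall>j\<in>M. ((\<lambda>\<alpha>. \<Sum>t. \<alpha> * (1 - \<alpha>) ^ t * vec_pow M \<nu> Q t j) \<longlongrightarrow> r j) (at_right 0))"

definition MSC :: "'a set \<Rightarrow> ('a set \<Rightarrow> 'a \<Rightarrow> 'a \<Rightarrow> real) \<Rightarrow> ('a set \<Rightarrow> 'a \<Rightarrow> real) \<Rightarrow> bool" where
  "MSC X Q \<nu> \<longleftrightarrow>
     (\<forall>M. menu X M \<longrightarrow>
        (\<forall>i\<in>M. \<forall>j\<in>M. 0 \<le> Q M i j) \<and>
        (\<forall>i\<in>M. 0 \<le> \<nu> M i) \<and> (\<Sum>i\<in>M. \<nu> M i) = 1 \<and>
        (\<forall>i\<in>M. Q M i i = 1 - (\<Sum>k\<in>M - {i}. Q M i k) \<and> Q M i i > 0) \<and>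
        (\<forall>i\<in>M. \<forall>j\<in>M. i \<noteq> j \<longrightarrow>
           (Q {i, j} i j = 0 \<longrightarrow> Q {i, j} j i > 0) \<and>
           Q {i, j} i j * Q M j i = Q {i, j} j i * Q M i j))"

definition rationalizes :: "'a set \<Rightarrow> ('a set \<Rightarrow> 'a \<Rightarrow> 'a \<Rightarrow> real) \<Rightarrow> ('a set \<Rightarrow> 'a \<Rightarrow> real)
    \<Rightarrow> ('a \<Rightarrow> 'a set \<Rightarrow> real) \<Rightarrow> bool" where
  "rationalizes X Q \<nu> p \<longleftrightarrow> (\<forall>M. menu X M \<longrightarrow> rho_is M (\<nu> M) (Q M) (\<lambda>i. p i M))"

definition pairwise_comparable :: "'a set \<Rightarrow> ('a \<Rightarrow> 'a \<Rightarrow> real) \<Rightarrow> bool" where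
  "pairwise_comparable M Q \<longleftrightarrow> (\<forall>i\<in>M. \<forall>j\<in>M. i \<noteq> j \<longrightarrow> Q i j = 0 \<longrightarrow> Q j i > 0)"

definition fully_comparable :: "'a set \<Rightarrow> ('a \<Rightarrow> 'a \<Rightarrow> real) \<Rightarrow> bool" where
  "fully_comparable M Q \<longleftrightarrow> (\<forall>i\<in>M. \<forall>j\<in>M. i \<noteq> j \<longrightarrow> Q i j > 0)"

text \<open>C is a cycle on M': M' = {i1,...,in} listed as distinct xs,
  C = {(i1,i2),...,(i(n-1),in),(in,i1)}.\<close>
definition is_cycle_on :: "'a set \<Rightarrow> ('a \<times> 'a) set \<Rightarrow> bool" where
  "is_cycle_on M' C \<longleftrightarrow> (\<exists>xs. distinct xs \<and> set xs = M' \<and> C = set (zip xs (rotate1 xs)))"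

definition bounded_in_cycle :: "('a \<Rightarrow> 'a set \<Rightarrow> real) \<Rightarrow> 'a set \<Rightarrow> 'a \<Rightarrow> 'a \<Rightarrow> bool" where
  "bounded_in_cycle p M i j \<longleftrightarrow>
     delta p M i j = 0 \<or>
     (\<exists>M' C. M' \<subseteq> M \<and> is_cycle_on M' C \<and> (i, j) \<in> C \<and>
        ((\<forall>(k, l)\<in>C. delta p M k l > 0) \<or> (\<forall>(k, l)\<in>C. delta p M k l < 0)))"

end

theory Submission
  imports Defs "HOL-Library.Transitive_Closure_Table"
begin


lemma zip_rotate_cons: "zip (a#as) (as@[b]) = zip (a#as) as @ [(last (a#as), b)]"
  by (induction as arbitrary: a) auto

lemma path_pairs: "rtrancl_path r x xs y \<Longrightarrow> \<forall>(a,b)\<in>set (zip (x#xs) xs). r a b"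
  by (induction rule: rtrancl_path.induct) auto

lemma cut_cycle:
  fixes d w :: "'a \<Rightarrow> 'a \<Rightarrow> real"
  assumes fin: "finite M"
    and anti: "\<And>k l. k\<in>M \<Longrightarrow> l\<in>M \<Longrightarrow> d k l = - d l k"
    and wsym: "\<And>k l. k\<in>M \<Longrightarrow> l\<in>M \<Longrightarrow> w k l = w l k"
    and wnn: "\<And>k l. k\<in>M \<Longrightarrow> l\<in>M \<Longrightarrow> w k l \<ge> 0"
    and cons: "\<And>l. l\<in>M \<Longrightarrow> (\<Sum>k\<in>M. w k l * d k l) = 0"
    and ij: "i\<in>M" "j\<in>M" "i \<noteq> j" "d i j > 0" "w i j > 0"
  shows "\<exists>xs. distinct xs \<and> set xs \<subseteq> M \<and> (i,j) \<in> set (zip xs (rotate1 xs)) \<and> (\<forall>(k,l)\<in>set (zip xs (rotate1 xs)). d k l > 0)"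
proof -
  define r where "r = (\<lambda>k l. k\<in>M \<and> l\<in>M \<and> d k l > 0)"
  define R where "R = {l. r\<^sup>*\<^sup>* j l}"
  have RM: "R \<subseteq> M"
  proof
    fix l assume "l \<in> R"
    hence "r\<^sup>*\<^sup>* j l" by (simp add: R_def)
    thus "l \<in> M" using ij(2) by (induction rule: rtranclp_induct) (auto simp: r_def)
  qed
  have finR: "finite R" using RM fin finite_subset by blast
  have jR: "j \<in> R" by (simp add: R_def)
  have "i \<in> R"
  proof (rule ccontr)
    assume iR: "i \<notin> R"
    define f where "f = (\<lambda>k l. w k l * d k l)"
    have fanti: "f k l = - f l k" if "k\<in>M" "l\<in>M" for k l using anti[OF that] wsym[OF that] by (simp add: f_def)
    have S0: "(\<Sum>l\<in>R. \<Sum>k\<in>M. f k l) = 0" 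
      by (rule sum.neutral) (use cons RM in \<open>auto simp: f_def\<close>)
    have split: "(\<Sum>l\<in>R. \<Sum>k\<in>M. f k l) = (\<Sum>l\<in>R. \<Sum>k\<in>R. f k l) + (\<Sum>l\<in>R. \<Sum>k\<in>M-R. f k l)"
    proof -
      have "\<And>l. (\<Sum>k\<in>M. f k l) = (\<Sum>k\<in>R. f k l) + (\<Sum>k\<in>M-R. f k l)"
        using sum.subset_diff[OF RM fin] by (simp add: add.commute)
      thus ?thesis by (simp add: sum.distrib)
    qed
    have inner: "(\<Sum>l\<in>R. \<Sum>k\<in>R. f k l) = 0"
    proof -
      have "(\<Sum>l\<in>R. \<Sum>k\<in>R. f k l) = (\<Sum>k\<in>R. \<Sum>l\<in>R. f k l)" by (rule sum.swap)
      also have "\<dots> = (\<Sum>k\<in>R. \<Sum>l\<in>R. - f l k)" using fanti RM by (intro sum.cong) auto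
      also have "\<dots> = - (\<Sum>l\<in>R. \<Sum>k\<in>R. f k l)" by (simp add: sum_negf)
      finally show ?thesis by simp
    qed
    have nn: "f k l \<ge> 0" if "l \<in> R" "k \<in> M - R" for k l
    proof -
      have kl: "k \<in> M" "l \<in> M" using that RM by auto
      have "\<not> d l k > 0"
      proof
        assume "d l k > 0"
        hence "r l k" using kl by (simp add: r_def)
        hence "r\<^sup>*\<^sup>* j k" using that(1) by (simp add: R_def)
        thus False using that(2) by (simp add: R_def)
      qed
      hence "d k l \<ge> 0" using anti[OF kl] by simp
      thus ?thesis using wnn[OF kl] by (simp add: f_def)
    qed
    have pos: "(\<Sum>l\<in>R. \<Sum>k\<in>M-R. f k l) > 0"
    proof (rule sum_pos2[OF finR jR])
      show "0 < (\<Sum>k\<in>M-R. f k j)"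
        using fin iR ij nn jR by (intro sum_pos2[of _ i]) (auto simp: f_def)
      show "\<And>l. l \<in> R \<Longrightarrow> 0 \<le> (\<Sum>k\<in>M - R. f k l)" using nn by (intro sum_nonneg) auto
    qed
    show False using S0 split inner pos by simp
  qed
  hence "r\<^sup>*\<^sup>* j i" by (simp add: R_def)
  then obtain ys where "rtrancl_path r j ys i" by (auto simp: rtranclp_eq_rtrancl_path)
  then obtain xs' where p: "rtrancl_path r j xs' i" and dist: "distinct (j # xs')"
    by (rule rtrancl_path_distinct)
  have ne: "xs' \<noteq> []" using p ij(3) by (cases rule: rtrancl_path.cases) auto
  have lst: "last (j # xs') = i" using rtrancl_path_last[OF p ne] ne by simp
  have rot: "rotate1 (j # xs') = xs' @ [j]" by simp
  have Z: "set (zip (j#xs') (rotate1 (j#xs'))) = set (zip (j#xs') xs') \<union> {(i,j)}"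
    unfolding rot zip_rotate_cons lst by auto
  have sub: "set (j#xs') \<subseteq> M"
    using ij(2) rtrancl_path_Range[OF p] by (auto simp: r_def)
  show ?thesis
  proof (intro exI conjI)
    show "distinct (j#xs')" by fact
    show "set (j#xs') \<subseteq> M" by fact
    show "(i,j) \<in> set (zip (j#xs') (rotate1 (j#xs')))" unfolding Z by simp
    show "\<forall>(k,l)\<in>set (zip (j#xs') (rotate1 (j#xs'))). d k l > 0"
      unfolding Z using path_pairs[OF p] ij(4) by (auto simp: r_def)
  qed
qed



lemma card_in_zip_snd:
  "length xs = length ys \<Longrightarrow> distinct ys \<Longrightarrow> card {a. (a,j) \<in> set (zip xs ys)} = (if j \<in> set ys then 1 else 0)"
proof (induction xs ys rule: list_induct2)
  case Nil thus ?case by simp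
next
  case (Cons x xs y ys)
  have eq: "{a. (a,j) \<in> set (zip (x#xs) (y#ys))} = (if y = j then {x} else {}) \<union> {a. (a,j) \<in> set (zip xs ys)}" by auto
  show ?case
  proof (cases "y = j")
    case True
    hence "{a. (a,j) \<in> set (zip xs ys)} = {}" using Cons.prems by (auto dest: set_zip_rightD)
    thus ?thesis using eq True by simp
  next
    case False thus ?thesis using eq Cons by simp
  qed
qed

lemma card_in_zip_fst:
  "length xs = length ys \<Longrightarrow> distinct xs \<Longrightarrow> card {b. (j,b) \<in> set (zip xs ys)} = (if j \<in> set xs then 1 else 0)"
proof (induction xs ys rule: list_induct2)
  case Nil thus ?case by simp
next
  case (Cons x xs y ys)
  have eq: "{b. (j,b) \<in> set (zip (x#xs) (y#ys))} = (if x = j then {y} else {}) \<union> {b. (j,b) \<in> set (zip xs ys)}" by auto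
  show ?case
  proof (cases "x = j")
    case True
    hence "{b. (j,b) \<in> set (zip xs ys)} = {}" using Cons.prems by (auto dest: set_zip_leftD)
    thus ?thesis using eq True by simp
  next
    case False thus ?thesis using eq Cons by simp
  qed
qed

definition cw :: "('a \<Rightarrow> 'a \<Rightarrow> real) \<Rightarrow> 'a list \<Rightarrow> 'a \<Rightarrow> 'a \<Rightarrow> real" where
 "cw d xs k l = (if (k,l) \<in> set (zip xs (rotate1 xs)) \<or> (l,k) \<in> set (zip xs (rotate1 xs)) then 1 / \<bar>d k l\<bar> else 0)"

lemma cw_cons:
  fixes d :: "'a \<Rightarrow> 'a \<Rightarrow> real"
  assumes fin: "finite M" and anti: "\<And>k l. k\<in>M \<Longrightarrow> l\<in>M \<Longrightarrow> d k l = - d l k"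
   and dist: "distinct xs" "set xs \<subseteq> M"
   and sgn: "s = 1 \<or> s = -1" "\<forall>(k,l)\<in>set (zip xs (rotate1 xs)). s * d k l > 0"
   and j: "j \<in> M"
  shows "(\<Sum>i\<in>M. cw d xs i j * d i j) = 0"
proof -
  define C where "C = set (zip xs (rotate1 xs))"
  have CM: "a \<in> set xs" "b \<in> set xs" if "(a,b) \<in> C" for a b
    using that by (auto simp: C_def dest: set_zip_leftD set_zip_rightD)
  have tm: "cw d xs i j * d i j = s * ((if (i,j)\<in>C then 1 else 0) - (if (j,i)\<in>C then 1 else 0))"
    if i: "i \<in> M" for i
  proof -
    have a: "d i j = - d j i" using anti[OF i j] .
    show ?thesis
    proof (cases "(i,j) \<in> C")
      case True
      have p: "s * d i j > 0" using sgn(2) True by (auto simp: C_def)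
      have "(j,i) \<notin> C"
      proof
        assume "(j,i) \<in> C"
        hence "s * d j i > 0" using sgn(2) by (auto simp: C_def)
        thus False using p a by simp
      qed
      thus ?thesis using True p sgn(1) by (auto simp: cw_def C_def[symmetric])
    next
      case False
      show ?thesis
      proof (cases "(j,i) \<in> C")
        case True
        have p: "s * d j i > 0" using sgn(2) True by (auto simp: C_def)
        thus ?thesis using True False sgn(1) a by (auto simp: cw_def C_def[symmetric])
      next
        case F2: False
        thus ?thesis using False by (auto simp: cw_def C_def[symmetric])
      qed
    qed
  qed
  have "(\<Sum>i\<in>M. cw d xs i j * d i j) = (\<Sum>i\<in>M. s * ((if (i,j)\<in>C then 1 else 0) - (if (j,i)\<in>C then 1 else 0)))"
    by (rule sum.cong) (simp_all add: tm)
  also have "\<dots> = s * ((\<Sum>i\<in>M. (if (i,j)\<in>C then 1 else 0)) - (\<Sum>i\<in>M. (if (j,i)\<in>C then 1 else 0)))"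
    by (simp add: sum_subtractf sum_distrib_left[symmetric])
  also have "(\<Sum>i\<in>M. (if (i,j)\<in>C then 1 else 0::real)) = card {i. (i,j) \<in> C}"
  proof -
    have "{i\<in>M. (i,j)\<in>C} = {i. (i,j) \<in> C}" using CM dist(2) by auto
    thus ?thesis using sum.inter_filter[OF fin, of "\<lambda>_. 1::real" "\<lambda>i. (i,j)\<in>C", symmetric] by simp
  qed
  also have "(\<Sum>i\<in>M. (if (j,i)\<in>C then 1 else 0::real)) = card {i. (j,i) \<in> C}"
  proof -
    have "{i\<in>M. (j,i)\<in>C} = {i. (j,i) \<in> C}" using CM dist(2) by auto
    thus ?thesis using sum.inter_filter[OF fin, of "\<lambda>_. 1::real" "\<lambda>i. (j,i)\<in>C", symmetric] by simp
  qed
  also have "card {i. (i,j) \<in> C} = card {i. (j,i) \<in> C}"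
    unfolding C_def using card_in_zip_snd[of xs "rotate1 xs" j] card_in_zip_fst[of xs "rotate1 xs" j] dist(1)
    by simp
  finally show ?thesis by simp
qed

lemma exists_weights:
  fixes d :: "'a \<Rightarrow> 'a \<Rightarrow> real"
  assumes fin: "finite M"
    and anti: "\<And>k l. k\<in>M \<Longrightarrow> l\<in>M \<Longrightarrow> d k l = - d l k"
    and cyc: "\<And>a b. a\<in>M \<Longrightarrow> b\<in>M \<Longrightarrow> a\<noteq>b \<Longrightarrow> d a b \<noteq> 0 \<Longrightarrow> \<exists>xs s. distinct xs \<and> set xs \<subseteq> M \<and> (a,b) \<in> set (zip xs (rotate1 xs)) \<and> (s = 1 \<or> s = -1) \<and> (\<forall>(k,l)\<in>set (zip xs (rotate1 xs)). s * d k l > 0)"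
  shows "\<exists>w. (\<forall>k\<in>M. \<forall>l\<in>M. w k l = w l k \<and> w k l \<ge> 0 \<and> (k \<noteq> l \<longrightarrow> w k l > 0)) \<and> (\<forall>l\<in>M. (\<Sum>k\<in>M. w k l * d k l) = 0)"
proof -
  define Q where "Q = (\<lambda>ab xs. \<exists>s. distinct xs \<and> set xs \<subseteq> M \<and> ab \<in> set (zip xs (rotate1 xs)) \<and> (s = 1 \<or> s = -1) \<and> (\<forall>(k,l)\<in>set (zip xs (rotate1 xs)). s * d k l > 0))"
  define P where "P = {(a,b). a\<in>M \<and> b\<in>M \<and> a\<noteq>b \<and> d a b \<noteq> 0}"
  define cy where "cy = (\<lambda>ab. SOME xs. Q ab xs)"
  have cyP: "Q ab (cy ab)" if "ab \<in> P" for ab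
  proof -
    obtain a b where ab: "ab = (a,b)" by (cases ab)
    have "\<exists>xs. Q ab xs" using cyc[of a b] that unfolding P_def Q_def ab by auto
    thus ?thesis unfolding cy_def by (rule someI_ex)
  qed
  have finP: "finite P" by (rule finite_subset[of _ "M \<times> M"]) (auto simp: P_def fin)
  define w where "w = (\<lambda>k l. (if d k l = 0 then 1 else 0) + (\<Sum>ab\<in>P. cw d (cy ab) k l))"
  have cwnn: "cw d xs k l \<ge> 0" for xs k l by (simp add: cw_def)
  have cwsym: "cw d xs k l = cw d xs l k" if "k\<in>M" "l\<in>M" for xs k l
    using anti[OF that] by (auto simp: cw_def)
  show ?thesis
  proof (intro exI conjI ballI impI)
    fix k l assume kl: "k \<in> M" "l \<in> M"
    show "w k l = w l k" using anti[OF kl] cwsym[OF kl] by (simp add: w_def)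
    show nn: "w k l \<ge> 0" unfolding w_def using cwnn by (intro add_nonneg_nonneg sum_nonneg) auto
    assume ne: "k \<noteq> l"
    show "w k l > 0"
    proof (cases "d k l = 0")
      case True thus ?thesis unfolding w_def using cwnn by (simp add: sum_nonneg add_pos_nonneg)
    next
      case False
      hence inP: "(k,l) \<in> P" using kl ne by (simp add: P_def)
      have "(k,l) \<in> set (zip (cy (k,l)) (rotate1 (cy (k,l))))" using cyP[OF inP] by (simp add: Q_def)
      hence "cw d (cy (k,l)) k l > 0" using False by (simp add: cw_def)
      also have "cw d (cy (k,l)) k l \<le> (\<Sum>ab\<in>P. cw d (cy ab) k l)"
        using finP inP cwnn by (intro member_le_sum) auto
      finally show ?thesis using False by (simp add: w_def)
    qed
  next
    fix l assume l: "l \<in> M"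
    have "(\<Sum>k\<in>M. w k l * d k l) = (\<Sum>k\<in>M. \<Sum>ab\<in>P. cw d (cy ab) k l * d k l)"
      unfolding w_def by (intro sum.cong) (auto simp: distrib_right sum_distrib_right)
    also have "\<dots> = (\<Sum>ab\<in>P. \<Sum>k\<in>M. cw d (cy ab) k l * d k l)" by (rule sum.swap)
    also have "\<dots> = 0"
    proof (rule sum.neutral, intro ballI)
      fix ab assume "ab \<in> P"
      then obtain s where "distinct (cy ab)" "set (cy ab) \<subseteq> M" "s = 1 \<or> s = -1"
        "\<forall>(k,l)\<in>set (zip (cy ab) (rotate1 (cy ab))). s * d k l > 0"
        using cyP unfolding Q_def by blast
      thus "(\<Sum>k\<in>M. cw d (cy ab) k l * d k l) = 0" using cw_cons[of M d, OF fin anti _ _ _ _ l] by blast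
    qed
    finally show "(\<Sum>k\<in>M. w k l * d k l) = 0" .
  qed
qed



lemma vec_pow_Suc:
  assumes "finite M"
  shows "vec_pow M \<nu> Q (Suc t) j = (\<Sum>k\<in>M. vec_pow M \<nu> Q t k * Q k j)"
proof -
  have "vec_pow M \<nu> Q (Suc t) j = (\<Sum>i\<in>M. \<Sum>k\<in>M. \<nu> i * mat_pow M Q t i k * Q k j)"
    by (simp add: vec_pow_def sum_distrib_left mult.assoc)
  also have "\<dots> = (\<Sum>k\<in>M. \<Sum>i\<in>M. \<nu> i * mat_pow M Q t i k * Q k j)" by (rule sum.swap)
  also have "\<dots> = (\<Sum>k\<in>M. vec_pow M \<nu> Q t k * Q k j)"
    by (simp add: vec_pow_def sum_distrib_right)
  finally show ?thesis .
qed

lemma vec_pow_0: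
  assumes "finite M" "j \<in> M" shows "vec_pow M \<nu> Q 0 j = \<nu> j"
  using assms by (simp add: vec_pow_def if_distrib cong: if_cong)

lemma ev01: "\<forall>\<^sub>F \<alpha> in at_right (0::real). 0 < \<alpha> \<and> \<alpha> < 1"
  apply (subst eventually_at_right[of "0::real" 1])
  by (auto intro!: exI[of _ 1])

lemma rho_of_stat:
  assumes fin: "finite M" and st: "\<And>j. j\<in>M \<Longrightarrow> (\<Sum>k\<in>M. \<nu> k * Q k j) = \<nu> j"
  shows "rho_is M \<nu> Q \<nu>"
proof -
  have vp: "vec_pow M \<nu> Q t j = \<nu> j" if "j \<in> M" for t j
    using that
  proof (induction t arbitrary: j)
    case 0 thus ?case using vec_pow_0[OF fin] by simp
  next
    case (Suc t)
    have "vec_pow M \<nu> Q (Suc t) j = (\<Sum>k\<in>M. \<nu> k * Q k j)"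
      unfolding vec_pow_Suc[OF fin] using Suc.IH by (intro sum.cong) auto
    thus ?case using st[OF Suc.prems] by simp
  qed
  show ?thesis unfolding rho_is_def
  proof
    fix j assume j: "j \<in> M"
    have "\<forall>\<^sub>F \<alpha> in at_right (0::real). (\<Sum>t. \<alpha> * (1 - \<alpha>) ^ t * vec_pow M \<nu> Q t j) = \<nu> j"
      using ev01
    proof eventually_elim
      case (elim \<alpha>)
      have g: "summable (\<lambda>t. (1-\<alpha>)^t)" using elim by (intro summable_geometric) auto
      have "(\<Sum>t. \<alpha> * (1 - \<alpha>) ^ t * vec_pow M \<nu> Q t j) = (\<Sum>t. (\<alpha> * \<nu> j) * (1 - \<alpha>) ^ t)"
        using vp[OF j] by (simp add: mult_ac)
      also have "\<dots> = (\<alpha> * \<nu> j) * (\<Sum>t. (1 - \<alpha>) ^ t)" by (rule suminf_mult[OF g])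
      also have "\<dots> = \<nu> j" using elim by (subst suminf_geometric) auto
      finally show ?case .
    qed
    thus "((\<lambda>\<alpha>. \<Sum>t. \<alpha> * (1 - \<alpha>) ^ t * vec_pow M \<nu> Q t j) \<longlongrightarrow> \<nu> j) (at_right 0)"
      by (subst tendsto_cong) auto
  qed
qed

lemma mat_pow_props:
  assumes fin: "finite M" and Qnn: "\<And>i j. i\<in>M \<Longrightarrow> j\<in>M \<Longrightarrow> Q i j \<ge> 0"
    and Qrow: "\<And>i. i\<in>M \<Longrightarrow> (\<Sum>j\<in>M. Q i j) = 1" and i: "i \<in> M"
  shows "(\<forall>j\<in>M. mat_pow M Q t i j \<ge> 0) \<and> (\<Sum>j\<in>M. mat_pow M Q t i j) = 1"
proof (induction t)
  case 0 thus ?case using fin i by simp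
next
  case (Suc t)
  have nn: "\<forall>j\<in>M. mat_pow M Q (Suc t) i j \<ge> 0"
    using Suc Qnn by (auto intro!: sum_nonneg mult_nonneg_nonneg)
  have "(\<Sum>j\<in>M. mat_pow M Q (Suc t) i j) = (\<Sum>j\<in>M. \<Sum>k\<in>M. mat_pow M Q t i k * Q k j)"
    by simp
  also have "\<dots> = (\<Sum>k\<in>M. \<Sum>j\<in>M. mat_pow M Q t i k * Q k j)" by (rule sum.swap)
  also have "\<dots> = (\<Sum>k\<in>M. mat_pow M Q t i k)" by (simp add: sum_distrib_left[symmetric] Qrow)
  also have "\<dots> = 1" using Suc by simp
  finally show ?case using nn by simp
qed

lemma stat_of_rho:
  assumes fin: "finite M" and Qnn: "\<And>i j. i\<in>M \<Longrightarrow> j\<in>M \<Longrightarrow> Q i j \<ge> 0"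
    and Qrow: "\<And>i. i\<in>M \<Longrightarrow> (\<Sum>j\<in>M. Q i j) = 1"
    and \<nu>nn: "\<And>i. i\<in>M \<Longrightarrow> \<nu> i \<ge> 0" and \<nu>sum: "(\<Sum>i\<in>M. \<nu> i) = 1"
    and rho: "rho_is M \<nu> Q r" and j: "j \<in> M"
  shows "(\<Sum>k\<in>M. r k * Q k j) = r j"
proof -
  define vp where "vp = vec_pow M \<nu> Q"
  have vpb: "0 \<le> vp t k \<and> vp t k \<le> 1" if "k \<in> M" for t k
  proof -
    have mp: "0 \<le> mat_pow M Q t i k \<and> mat_pow M Q t i k \<le> 1" if "i \<in> M" for i
    proof -
      from mat_pow_props[OF fin Qnn Qrow that, where t=t] 
      have a: "\<forall>j\<in>M. mat_pow M Q t i j \<ge> 0" "(\<Sum>j\<in>M. mat_pow M Q t i j) = 1" by auto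
      have "mat_pow M Q t i k \<le> (\<Sum>j\<in>M. mat_pow M Q t i j)"
        using a(1) \<open>k\<in>M\<close> fin by (intro member_le_sum) auto
      thus ?thesis using a \<open>k\<in>M\<close> by auto
    qed
    have "vp t k \<le> (\<Sum>i\<in>M. \<nu> i * 1)" unfolding vp_def vec_pow_def
      using mp \<nu>nn by (intro sum_mono mult_left_mono) auto
    moreover have "vp t k \<ge> 0" unfolding vp_def vec_pow_def
      using mp \<nu>nn by (intro sum_nonneg mult_nonneg_nonneg) auto
    ultimately show ?thesis using \<nu>sum by simp
  qed
  define A where "A = (\<lambda>\<alpha> k. \<Sum>t. \<alpha> * (1 - \<alpha>) ^ t * vp t k)"
  have summ: "summable (\<lambda>t. \<alpha> * (1 - \<alpha>) ^ t * vp t k)" if "0 < \<alpha>" "\<alpha> < 1" "k \<in> M" for \<alpha> k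
  proof (rule summable_comparison_test[of _ "\<lambda>t. \<alpha> * (1 - \<alpha>) ^ t"])
    show "summable (\<lambda>t. \<alpha> * (1 - \<alpha>) ^ t)" using that by (intro summable_mult summable_geometric) auto
    show "\<exists>N. \<forall>n\<ge>N. norm (\<alpha> * (1 - \<alpha>) ^ n * vp n k) \<le> \<alpha> * (1 - \<alpha>) ^ n"
      using vpb[OF that(3)] that by (auto simp: abs_mult intro!: mult_left_le)
  qed
  have key: "A \<alpha> j = \<alpha> * \<nu> j + (1 - \<alpha>) * (\<Sum>k\<in>M. A \<alpha> k * Q k j)" if "0 < \<alpha>" "\<alpha> < 1" for \<alpha>
  proof -
    have s: "summable (\<lambda>t. \<alpha> * (1 - \<alpha>) ^ t * vp t j)" by (rule summ[OF that j])
    have "(\<Sum>t. \<alpha> * (1 - \<alpha>) ^ Suc t * vp (Suc t) j)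
        = (\<Sum>t. (1 - \<alpha>) * (\<Sum>k\<in>M. (\<alpha> * (1 - \<alpha>) ^ t * vp t k) * Q k j))"
      unfolding vp_def vec_pow_Suc[OF fin] by (simp add: sum_distrib_left mult_ac)
    also have "\<dots> = (1 - \<alpha>) * (\<Sum>t. \<Sum>k\<in>M. (\<alpha> * (1 - \<alpha>) ^ t * vp t k) * Q k j)"
      using summ that by (intro suminf_mult summable_sum summable_mult2) auto
    also have "\<dots> = (1 - \<alpha>) * (\<Sum>k\<in>M. \<Sum>t. (\<alpha> * (1 - \<alpha>) ^ t * vp t k) * Q k j)"
      using summ that by (subst suminf_sum) (auto intro: summable_mult2)
    also have "\<dots> = (1 - \<alpha>) * (\<Sum>k\<in>M. A \<alpha> k * Q k j)"
      unfolding A_def using summ that by (intro arg_cong[where f="\<lambda>x. (1-\<alpha>) * x"] sum.cong refl suminf_mult2[symmetric]) auto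
    finally have tail: "(\<Sum>t. \<alpha> * (1 - \<alpha>) ^ Suc t * vp (Suc t) j) = (1 - \<alpha>) * (\<Sum>k\<in>M. A \<alpha> k * Q k j)" .
    have "A \<alpha> j = (\<Sum>t. \<alpha> * (1 - \<alpha>) ^ Suc t * vp (Suc t) j) + \<alpha> * vp 0 j"
      unfolding A_def using suminf_split_head[OF s] by simp
    also have "vp 0 j = \<nu> j" unfolding vp_def by (rule vec_pow_0[OF fin j])
    finally show ?thesis using tail by simp
  qed
  have lim: "((\<lambda>\<alpha>. A \<alpha> k) \<longlongrightarrow> r k) (at_right 0)" if "k \<in> M" for k
    using rho that unfolding rho_is_def A_def vp_def by auto
  have l1: "((\<lambda>\<alpha>. \<alpha> * \<nu> j + (1 - \<alpha>) * (\<Sum>k\<in>M. A \<alpha> k * Q k j)) \<longlongrightarrow> 0 * \<nu> j + (1 - 0) * (\<Sum>k\<in>M. r k * Q k j)) (at_right 0)"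
    by (intro tendsto_intros lim) auto
  have "\<forall>\<^sub>F \<alpha> in at_right (0::real). A \<alpha> j = \<alpha> * \<nu> j + (1 - \<alpha>) * (\<Sum>k\<in>M. A \<alpha> k * Q k j)"
    using ev01 by eventually_elim (use key in auto)
  hence "((\<lambda>\<alpha>. A \<alpha> j) \<longlongrightarrow> 0 * \<nu> j + (1 - 0) * (\<Sum>k\<in>M. r k * Q k j)) (at_right 0)"
    using l1 by (subst tendsto_cong) auto
  from tendsto_unique[OF _ lim[OF j] this] show ?thesis by simp
qed



lemma menu_pair: "menu X M \<Longrightarrow> i \<in> M \<Longrightarrow> j \<in> M \<Longrightarrow> menu X {i,j}"
  by (auto simp: menu_def)

lemma sc_bnd: "stoch_choice X p \<Longrightarrow> menu X N \<Longrightarrow> i \<in> X \<Longrightarrow> 0 \<le> p i N \<and> p i N \<le> 1"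
  by (auto simp: stoch_choice_def)

lemma sc_sum: "stoch_choice X p \<Longrightarrow> menu X N \<Longrightarrow> (\<Sum>i\<in>N. p i N) = 1"
  by (auto simp: stoch_choice_def)

lemma sc_pair: "stoch_choice X p \<Longrightarrow> i \<in> X \<Longrightarrow> j \<in> X \<Longrightarrow> i \<noteq> j \<Longrightarrow> p i {i,j} + p j {i,j} = 1"
  using sc_sum[of X p "{i,j}"] by (simp add: menu_def)

lemma sc_single: "stoch_choice X p \<Longrightarrow> i \<in> X \<Longrightarrow> p i {i} = 1"
  using sc_sum[of X p "{i}"] by (simp add: menu_def)

lemma delta_anti: "delta p M j i = - delta p M i j"
  by (simp add: delta_def insert_commute)

lemma delta_diag: "delta p M i i = 0"
  by (simp add: delta_def)

lemma MSC_N: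
  assumes "MSC X Q \<nu>" "menu X N"
  shows "(\<forall>i\<in>N. \<forall>j\<in>N. 0 \<le> Q N i j) \<and>
        (\<forall>i\<in>N. 0 \<le> \<nu> N i) \<and> (\<Sum>i\<in>N. \<nu> N i) = 1 \<and>
        (\<forall>i\<in>N. Q N i i = 1 - (\<Sum>k\<in>N - {i}. Q N i k) \<and> Q N i i > 0) \<and>
        (\<forall>i\<in>N. \<forall>j\<in>N. i \<noteq> j \<longrightarrow>
           (Q {i, j} i j = 0 \<longrightarrow> Q {i, j} j i > 0) \<and>
           Q {i, j} i j * Q N j i = Q {i, j} j i * Q N i j)"
proof -
  have "menu X N \<longrightarrow> ((\<forall>i\<in>N. \<forall>j\<in>N. 0 \<le> Q N i j) \<and>
        (\<forall>i\<in>N. 0 \<le> \<nu> N i) \<and> (\<Sum>i\<in>N. \<nu> N i) = 1 \<and>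
        (\<forall>i\<in>N. Q N i i = 1 - (\<Sum>k\<in>N - {i}. Q N i k) \<and> Q N i i > 0) \<and>
        (\<forall>i\<in>N. \<forall>j\<in>N. i \<noteq> j \<longrightarrow>
           (Q {i, j} i j = 0 \<longrightarrow> Q {i, j} j i > 0) \<and>
           Q {i, j} i j * Q N j i = Q {i, j} j i * Q N i j))"
    using assms(1) unfolding MSC_def by (rule spec)
  thus ?thesis using assms(2) by (rule mp)
qed

lemma MSC_nn: "MSC X Q \<nu> \<Longrightarrow> menu X N \<Longrightarrow> i \<in> N \<Longrightarrow> j \<in> N \<Longrightarrow> 0 \<le> Q N i j"
proof -
  assume a: "MSC X Q \<nu>" "menu X N" "i \<in> N" "j \<in> N"
  have "\<forall>i\<in>N. \<forall>j\<in>N. 0 \<le> Q N i j" using MSC_N[OF a(1,2)] by (rule conjunct1)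
  thus ?thesis using a(3,4) by simp
qed

lemma MSC_A23: "MSC X Q \<nu> \<Longrightarrow> menu X N \<Longrightarrow> i \<in> N \<Longrightarrow> j \<in> N \<Longrightarrow> i \<noteq> j \<Longrightarrow>
   (Q {i, j} i j = 0 \<longrightarrow> Q {i, j} j i > 0) \<and> Q {i, j} i j * Q N j i = Q {i, j} j i * Q N i j"
proof -
  assume a: "MSC X Q \<nu>" "menu X N" "i \<in> N" "j \<in> N" "i \<noteq> j"
  have "\<forall>i\<in>N. \<forall>j\<in>N. i \<noteq> j \<longrightarrow>
           (Q {i, j} i j = 0 \<longrightarrow> Q {i, j} j i > 0) \<and>
           Q {i, j} i j * Q N j i = Q {i, j} j i * Q N i j"
    using MSC_N[OF a(1,2)] by (elim conjE)
  thus ?thesis using a(3-5) by blast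
qed

lemma MSC_row:
  assumes "MSC X Q \<nu>" "menu X N" "finite X" "i \<in> N"
  shows "(\<Sum>j\<in>N. Q N i j) = 1"
proof -
  have fN: "finite N" using assms by (auto simp: menu_def intro: finite_subset)
  have "(\<Sum>j\<in>N. Q N i j) = Q N i i + (\<Sum>j\<in>N-{i}. Q N i j)"
    using sum.remove[OF fN assms(4)] by simp
  thus ?thesis using MSC_N[OF assms(1,2)] assms(4) by auto
qed

lemma necessity:
  assumes finX: "finite X" and sc: "stoch_choice X p" and mM: "menu X M"
    and msc: "MSC X Q \<nu>" and rat: "rationalizes X Q \<nu> p"
  shows stat: "\<And>N j. menu X N \<Longrightarrow> j \<in> N \<Longrightarrow> (\<Sum>k\<in>N. p k N * Q N k j) = p j N"
    and rel: "\<And>i j. i \<in> M \<Longrightarrow> j \<in> M \<Longrightarrow> i \<noteq> j \<Longrightarrow> p j {i,j} * Q M j i = p i {i,j} * Q M i j"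
proof -
  show st: "(\<Sum>k\<in>N. p k N * Q N k j) = p j N" if N: "menu X N" "j \<in> N" for N j
  proof -
    have fN: "finite N" using N finX by (auto simp: menu_def intro: finite_subset)
    have m: "(\<forall>i\<in>N. \<forall>j\<in>N. 0 \<le> Q N i j) \<and> (\<forall>i\<in>N. 0 \<le> \<nu> N i) \<and> (\<Sum>i\<in>N. \<nu> N i) = 1"
      using MSC_N[OF msc N(1)] by (elim conjE) (intro conjI; assumption)
    show ?thesis
    proof (rule stat_of_rho[OF fN, of "Q N" "\<nu> N" "\<lambda>i. p i N" j])
      show "rho_is N (\<nu> N) (Q N) (\<lambda>i. p i N)" using rat N(1) unfolding rationalizes_def by blast
    qed (use m MSC_row[OF msc N(1) finX] N(2) in auto)
  qed
  fix i j assume ij: "i \<in> M" "j \<in> M" "i \<noteq> j"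
  define T where "T = {i,j}"
  have mT: "menu X T" unfolding T_def by (rule menu_pair[OF mM ij(1,2)])
  have iX: "i \<in> X" "j \<in> X" using mM ij by (auto simp: menu_def)
  have s: "p i T * Q T i j + p j T * Q T j j = p j T"
    using st[OF mT, of j] ij(3) by (simp add: T_def)
  have mT': "Q T j j = 1 - (\<Sum>k\<in>T-{j}. Q T j k)" "Q T i j \<ge> 0" "Q T j i \<ge> 0"
    using MSC_N[OF msc mT] ij unfolding T_def by auto
  have "T - {j} = {i}" using ij(3) by (auto simp: T_def)
  hence qjj: "Q T j j = 1 - Q T j i" using mT' by simp
  define a where "a = Q T i j"
  define b where "b = Q T j i"
  define x where "x = Q M j i"
  define y where "y = Q M i j"
  have e1: "p i T * a = p j T * b" using s qjj by (simp add: a_def b_def algebra_simps)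
  have A2: "a = 0 \<longrightarrow> b > 0" and A3: "a * x = b * y"
    using MSC_N[OF msc mM] ij unfolding T_def a_def b_def x_def y_def by blast+
  have ps: "p i T + p j T = 1" using sc_pair[OF sc iX ij(3)] by (simp add: T_def)
  have "p j T * x = p i T * y"
  proof (cases "a = 0")
    case False
    have "a * (p j T * x) = a * (p i T * y)"
    proof -
      have "a * (p j T * x) = p j T * (a * x)" by (simp add: algebra_simps)
      also have "\<dots> = p j T * b * y" using A3 by simp
      also have "\<dots> = p i T * a * y" using e1 by simp
      finally show ?thesis by (simp add: algebra_simps)
    qed
    thus ?thesis using False by simp
  next
    case True
    hence "b > 0" using A2 by simp
    hence "p j T = 0" "y = 0" using e1 A3 True by auto
    thus ?thesis by simp
  qed
  thus "p j {i,j} * Q M j i = p i {i,j} * Q M i j" by (simp add: T_def x_def y_def)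
qed



lemma alg1:
  fixes y x pk pl Pk Pl :: real
  assumes "pl * x = pk * y" "pk + pl = 1"
  shows "(y + x) * (Pk * pl - pk * Pl) = Pk * y - Pl * x"
proof -
  have pk: "pk = 1 - pl" using assms(2) by simp
  have "(y + x) * (Pk * pl - pk * Pl) - (Pk * y - Pl * x) = (Pk + Pl) * (pl * x - pk * y)"
    unfolding pk by (simp add: algebra_simps)
  thus ?thesis using assms(1) by simp
qed

lemma cycle_bounded:
  assumes "distinct xs" "set xs \<subseteq> M" "(i,j) \<in> set (zip xs (rotate1 xs))"
    "(\<forall>(k,l)\<in>set (zip xs (rotate1 xs)). delta p M k l > 0) \<or> (\<forall>(k,l)\<in>set (zip xs (rotate1 xs)). delta p M k l < 0)"
  shows "bounded_in_cycle p M i j"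
proof -
  have c: "is_cycle_on (set xs) (set (zip xs (rotate1 xs)))" unfolding is_cycle_on_def using assms(1) by blast
  show ?thesis unfolding bounded_in_cycle_def
    apply (rule disjI2)
    apply (rule exI[of _ "set xs"], rule exI[of _ "set (zip xs (rotate1 xs))"])
    using assms c by simp
qed

lemma only_if_a:
  assumes finX: "finite X" and sc: "stoch_choice X p" and mM: "menu X M"
    and msc: "MSC X Q \<nu>" and rat: "rationalizes X Q \<nu> p"
    and pc: "pairwise_comparable M (Q M)"
  shows "\<forall>i\<in>M. \<forall>j\<in>M. i \<noteq> j \<longrightarrow> bounded_in_cycle p M i j"
proof (intro ballI impI)
  fix i j assume ij: "i \<in> M" "j \<in> M" "i \<noteq> j"
  have fM: "finite M" using mM finX by (auto simp: menu_def intro: finite_subset)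
  have MX: "M \<subseteq> X" using mM by (simp add: menu_def)
  define w where "w = (\<lambda>k l. Q M k l + Q M l k)"
  have wsym: "w k l = w l k" for k l by (simp add: w_def)
  have wnn: "w k l \<ge> 0" if "k \<in> M" "l \<in> M" for k l using MSC_nn[OF msc mM] that by (simp add: w_def add_nonneg_nonneg)
  have wpos: "w k l > 0" if "k \<in> M" "l \<in> M" "k \<noteq> l" for k l
  proof -
    have "Q M k l \<ge> 0" "Q M l k \<ge> 0" using MSC_nn[OF msc mM] that by auto
    moreover have "Q M k l = 0 \<longrightarrow> Q M l k > 0" using pc that unfolding pairwise_comparable_def by auto
    ultimately show ?thesis by (auto simp: w_def)
  qed
  have cons: "(\<Sum>k\<in>M. w k l * delta p M k l) = 0" if l: "l \<in> M" for l
  proof -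
    have tm: "w k l * delta p M k l = p k M * Q M k l - p l M * Q M l k" if k: "k \<in> M" for k
    proof (cases "k = l")
      case True thus ?thesis by (simp add: delta_diag)
    next
      case False
      have r: "p l {k,l} * Q M l k = p k {k,l} * Q M k l" using necessity(2)[OF finX sc mM msc rat k l False] .
      have s: "p k {k,l} + p l {k,l} = 1" using sc_pair[OF sc _ _ False] k l MX by auto
      show ?thesis unfolding w_def delta_def by (rule alg1[OF r s])
    qed
    have "(\<Sum>k\<in>M. w k l * delta p M k l) = (\<Sum>k\<in>M. p k M * Q M k l) - p l M * (\<Sum>k\<in>M. Q M l k)"
      using tm by (simp add: sum_subtractf sum_distrib_left)
    also have "\<dots> = 0" using necessity(1)[OF finX sc mM msc rat mM l] MSC_row[OF msc mM finX l] by simp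
    finally show ?thesis .
  qed
  have wsym': "w k l = w l k" if "k \<in> M" "l \<in> M" for k l by (rule wsym)
  have ap: "delta p M k l = - delta p M l k" if "k \<in> M" "l \<in> M" for k l by (metis delta_anti minus_minus)
  have an: "- delta p M k l = - (- delta p M l k)" if "k \<in> M" "l \<in> M" for k l by (metis delta_anti minus_minus)
  show "bounded_in_cycle p M i j"
  proof (cases "delta p M i j" "0::real" rule: linorder_cases)
    case equal thus ?thesis by (simp add: bounded_in_cycle_def)
  next
    case greater
    have "\<exists>xs. distinct xs \<and> set xs \<subseteq> M \<and> (i,j) \<in> set (zip xs (rotate1 xs)) \<and> (\<forall>(k,l)\<in>set (zip xs (rotate1 xs)). delta p M k l > 0)"
      by (rule cut_cycle[of M "delta p M" w i j, OF fM ap wsym' wnn cons ij(1) ij(2) ij(3) greater wpos[OF ij]])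
    then obtain xs where x: "distinct xs" "set xs \<subseteq> M" "(i,j) \<in> set (zip xs (rotate1 xs))" "(\<forall>(k,l)\<in>set (zip xs (rotate1 xs)). delta p M k l > 0)" by blast
    show ?thesis by (rule cycle_bounded[OF x(1-3)]) (use x(4) in simp)
  next
    case less
    have neg: "0 < - delta p M i j" using less by simp
    have cons': "(\<Sum>k\<in>M. w k l * (- delta p M k l)) = 0" if "l \<in> M" for l
      using cons[OF that] by (simp add: sum_negf)
    have "\<exists>xs. distinct xs \<and> set xs \<subseteq> M \<and> (i,j) \<in> set (zip xs (rotate1 xs)) \<and> (\<forall>(k,l)\<in>set (zip xs (rotate1 xs)). - delta p M k l > 0)"
      by (rule cut_cycle[of M "\<lambda>k l. - delta p M k l" w i j, OF fM an wsym' wnn cons' ij(1) ij(2) ij(3) neg wpos[OF ij]])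
    then obtain xs where "distinct xs \<and> set xs \<subseteq> M \<and> (i,j) \<in> set (zip xs (rotate1 xs)) \<and> (\<forall>(k,l)\<in>set (zip xs (rotate1 xs)). - delta p M k l > 0)" by blast
    hence x: "distinct xs" "set xs \<subseteq> M" "(i,j) \<in> set (zip xs (rotate1 xs))" "(\<forall>(k,l)\<in>set (zip xs (rotate1 xs)). delta p M k l < 0)"
      by auto
    show ?thesis by (rule cycle_bounded[OF x(1-3)]) (use x(4) in simp)
  qed
qed

lemma only_if_b:
  assumes finX: "finite X" and sc: "stoch_choice X p" and mM: "menu X M"
    and msc: "MSC X Q \<nu>" and rat: "rationalizes X Q \<nu> p"
    and fc: "fully_comparable M (Q M)"
  shows "(\<forall>i\<in>M. p i M > 0) \<and> (\<forall>i\<in>M. \<forall>j\<in>M. p i {i, j} > 0)"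
proof (intro conjI ballI)
  have fM: "finite M" using mM finX by (auto simp: menu_def intro: finite_subset)
  have MX: "M \<subseteq> X" using mM by (simp add: menu_def)
  fix j assume j: "j \<in> M"
  show "p j M > 0"
  proof (rule ccontr)
    assume "\<not> p j M > 0"
    moreover have "0 \<le> p j M" using sc_bnd[OF sc mM, of j] j MX by auto
    ultimately have pj0: "p j M = 0" by linarith
    have nn: "\<forall>k\<in>M. 0 \<le> p k M * Q M k j"
    proof
      fix k assume k: "k \<in> M"
      have "0 \<le> p k M" using sc_bnd[OF sc mM, of k] k MX by auto
      moreover have "0 \<le> Q M k j" using MSC_nn[OF msc mM k j] .
      ultimately show "0 \<le> p k M * Q M k j" by simp
    qed
    have "(\<Sum>k\<in>M. p k M * Q M k j) = 0" using necessity(1)[OF finX sc mM msc rat mM j] pj0 by simp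
    hence z: "\<forall>k\<in>M. p k M * Q M k j = 0" using sum_nonneg_eq_0_iff[OF fM, of "\<lambda>k. p k M * Q M k j"] nn by simp
    have "\<forall>k\<in>M. p k M = 0"
    proof
      fix k assume k: "k \<in> M"
      show "p k M = 0"
      proof (cases "k = j")
        case True thus ?thesis using pj0 by simp
      next
        case False
        hence "Q M k j > 0" using fc k j unfolding fully_comparable_def by auto
        thus ?thesis using z k by force
      qed
    qed
    hence "(\<Sum>k\<in>M. p k M) = 0" by simp
    thus False using sc_sum[OF sc mM] by simp
  qed
next
  have MX: "M \<subseteq> X" using mM by (simp add: menu_def)
  fix i j assume ij: "i \<in> M" "j \<in> M"
  show "p i {i,j} > 0"
  proof (cases "i = j")
    case True thus ?thesis using sc_single[OF sc] ij MX by auto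
  next
    case False
    show ?thesis
    proof (rule ccontr)
      assume "\<not> p i {i,j} > 0"
      moreover have "0 \<le> p i {i,j}" using sc_bnd[OF sc menu_pair[OF mM ij], of i] ij MX by auto
      ultimately have pi0: "p i {i,j} = 0" by linarith
      have iX: "i \<in> X" "j \<in> X" using ij MX by auto
      have "p j {i,j} = 1" using sc_pair[OF sc iX False] pi0 by simp
      hence "Q M j i = 0" using necessity(2)[OF finX sc mM msc rat ij False] pi0 by simp
      moreover have "Q M j i > 0" using fc ij False unfolding fully_comparable_def by auto
      ultimately show False by simp
    qed
  qed
qed



lemma card2_eq: "finite N \<Longrightarrow> card N = 2 \<Longrightarrow> k \<in> N \<Longrightarrow> j \<in> N \<Longrightarrow> k \<noteq> j \<Longrightarrow> N = {k,j}"
proof -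
  assume a: "finite N" "card N = 2" "k \<in> N" "j \<in> N" "k \<noteq> j"
  have "{k,j} \<subseteq> N" using a by auto
  moreover have "card {k,j} = card N" using a by simp
  ultimately show "N = {k,j}" using card_subset_eq[OF a(1)] by blast
qed

lemma construct:
  assumes finX: "finite X" and sc: "stoch_choice X p" and mM: "menu X M"
    and bc: "\<forall>i\<in>M. \<forall>j\<in>M. i \<noteq> j \<longrightarrow> bounded_in_cycle p M i j"
  shows "\<exists>Q \<nu>. MSC X Q \<nu> \<and> rationalizes X Q \<nu> p \<and> pairwise_comparable M (Q M) \<and>
           ((\<forall>i\<in>M. \<forall>j\<in>M. p i {i,j} > 0) \<longrightarrow> fully_comparable M (Q M))"
proof -
  have fM: "finite M" using mM finX by (auto simp: menu_def intro: finite_subset)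
  have MX: "M \<subseteq> X" using mM by (simp add: menu_def)
  have anti: "delta p M k l = - delta p M l k" if "k \<in> M" "l \<in> M" for k l by (metis delta_anti minus_minus)
  have cyc: "\<exists>xs s. distinct xs \<and> set xs \<subseteq> M \<and> (a,b) \<in> set (zip xs (rotate1 xs)) \<and> (s = 1 \<or> s = -1) \<and> (\<forall>(k,l)\<in>set (zip xs (rotate1 xs)). s * delta p M k l > 0)"
    if ab: "a \<in> M" "b \<in> M" "a \<noteq> b" "delta p M a b \<noteq> 0" for a b
  proof -
    have "bounded_in_cycle p M a b" using bc ab(1,2,3) by simp
    hence "\<exists>M' C. M' \<subseteq> M \<and> is_cycle_on M' C \<and> (a,b) \<in> C \<and>
        ((\<forall>(k, l)\<in>C. delta p M k l > 0) \<or> (\<forall>(k, l)\<in>C. delta p M k l < 0))"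
      using ab(4) unfolding bounded_in_cycle_def by simp
    then obtain M' C where MC: "M' \<subseteq> M" "is_cycle_on M' C" "(a,b) \<in> C"
        "(\<forall>(k, l)\<in>C. delta p M k l > 0) \<or> (\<forall>(k, l)\<in>C. delta p M k l < 0)"
      by (elim exE conjE)
    then obtain xs where xs: "distinct xs" "set xs = M'" "C = set (zip xs (rotate1 xs))"
      unfolding is_cycle_on_def by (elim exE conjE)
    show ?thesis
    proof (cases "\<forall>(k, l)\<in>C. delta p M k l > 0")
      case True
      show ?thesis
        by (rule exI[of _ xs], rule exI[of _ 1]) (use xs MC True in auto)
    next
      case False
      hence neg: "\<forall>(k, l)\<in>C. delta p M k l < 0" using MC(4) by blast
      show ?thesis
        by (rule exI[of _ xs], rule exI[of _ "-1"]) (use xs MC neg in auto)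
    qed
  qed
  obtain w where w: "\<forall>k\<in>M. \<forall>l\<in>M. w k l = w l k \<and> w k l \<ge> 0 \<and> (k \<noteq> l \<longrightarrow> w k l > 0)"
      and wcons: "\<forall>l\<in>M. (\<Sum>k\<in>M. w k l * delta p M k l) = 0"
    using exists_weights[of M "delta p M", OF fM anti cyc] by blast
  define S where "S = (\<Sum>k\<in>M. \<Sum>l\<in>M. w k l)"
  define c where "c = 1 / (1 + S)"
  have S0: "S \<ge> 0" unfolding S_def using w by (intro sum_nonneg) auto
  have c0: "c > 0" using S0 by (simp add: c_def)
  have cS: "c * S < 1" using S0 by (simp add: c_def field_simps)
  have rowS: "(\<Sum>l\<in>M. w i l) \<le> S" if "i \<in> M" for i
    unfolding S_def using fM that w by (intro member_le_sum[of i M "\<lambda>k. \<Sum>l\<in>M. w k l"] sum_nonneg) auto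
  define \<beta> where "\<beta> = (\<lambda>N i j. if N = M then c * w i j else if card N = 2 then 1/2 else (0::real))"
  define Q where "Q = (\<lambda>N i j. if i = j then 1 - (\<Sum>k\<in>N-{i}. \<beta> N i k * p k {i,k}) else \<beta> N i j * p j {i,j})"
  define \<nu> where "\<nu> = (\<lambda>N i. p i N)"
  have \<beta>nn: "\<beta> N i j \<ge> 0" if "menu X N" "i \<in> N" "j \<in> N" for N i j
    using w c0 that by (auto simp: \<beta>_def)
  have \<beta>sym: "\<beta> N i j = \<beta> N j i" if "menu X N" "i \<in> N" "j \<in> N" for N i j
    using w that by (auto simp: \<beta>_def)
  have \<beta>pos: "\<beta> {i,j} i j > 0" if "i \<in> X" "j \<in> X" "i \<noteq> j" for i j
  proof (cases "{i,j} = M")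
    case True
    hence "i \<in> M" "j \<in> M" by auto
    thus ?thesis using True w c0 that(3) by (simp add: \<beta>_def)
  next
    case False thus ?thesis using that(3) by (simp add: \<beta>_def)
  qed
  have pb: "0 \<le> p k {i,k} \<and> p k {i,k} \<le> 1" if "i \<in> X" "k \<in> X" for i k
    using sc_bnd[OF sc, of "{i,k}" k] that by (simp add: menu_def)
  have offsum: "(\<Sum>k\<in>N-{i}. \<beta> N i k * p k {i,k}) < 1" if N: "menu X N" "i \<in> N" for N i
  proof -
    have fN: "finite N" using N finX by (auto simp: menu_def intro: finite_subset)
    have NX: "N \<subseteq> X" using N by (simp add: menu_def)
    have le: "\<beta> N i k * p k {i,k} \<le> \<beta> N i k" if "k \<in> N" for k
      using pb[of i k] \<beta>nn[OF N(1) N(2) that] NX N(2) that by (auto intro: mult_left_le)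
    show ?thesis
    proof (cases "N = M")
      case True
      have "(\<Sum>k\<in>N-{i}. \<beta> N i k * p k {i,k}) \<le> (\<Sum>k\<in>N-{i}. c * w i k)"
        using le True by (intro sum_mono) (auto simp: \<beta>_def)
      also have "\<dots> \<le> (\<Sum>k\<in>N. c * w i k)"
        using fN True w c0 N(2) by (intro sum_mono2) auto
      also have "\<dots> = c * (\<Sum>k\<in>M. w i k)" using True by (simp add: sum_distrib_left)
      also have "\<dots> \<le> c * S" using rowS[of i] N(2) True c0 by (intro mult_left_mono) auto
      finally show ?thesis using cS by simp
    next
      case NM: False
      show ?thesis
      proof (cases "card N = 2")
        case True
        have "(\<Sum>k\<in>N-{i}. \<beta> N i k * p k {i,k}) \<le> (\<Sum>k\<in>N-{i}. 1/2)"
          using le NM True by (intro sum_mono) (auto simp: \<beta>_def)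
        also have "\<dots> = 1/2" using True N(2) fN by simp
        finally show ?thesis by simp
      next
        case False thus ?thesis using NM by (simp add: \<beta>_def)
      qed
    qed
  qed
  have msc: "MSC X Q \<nu>"
    unfolding MSC_def
  proof (intro allI impI conjI ballI)
    fix N assume N: "menu X N"
    have NX: "N \<subseteq> X" using N by (simp add: menu_def)
    show "\<nu> N i \<ge> 0" if "i \<in> N" for i using sc_bnd[OF sc N, of i] that NX by (auto simp: \<nu>_def)
    show "(\<Sum>i\<in>N. \<nu> N i) = 1" using sc_sum[OF sc N] by (simp add: \<nu>_def)
    fix i assume i: "i \<in> N"
    show "Q N i i > 0" using offsum[OF N i] by (simp add: Q_def)
    show "Q N i i = 1 - (\<Sum>k\<in>N-{i}. Q N i k)"
    proof -
      have e: "(\<Sum>k\<in>N-{i}. Q N i k) = (\<Sum>k\<in>N-{i}. \<beta> N i k * p k {i,k})"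
        by (intro sum.cong) (auto simp: Q_def)
      show ?thesis unfolding e by (simp add: Q_def)
    qed
    show "Q N i j \<ge> 0" if j: "j \<in> N" for j
    proof (cases "i = j")
      case True thus ?thesis using offsum[OF N i] by (simp add: Q_def)
    next
      case False
      have "0 \<le> p j {i,j}" using pb[of i j] NX i j by auto
      thus ?thesis using False \<beta>nn[OF N i j] by (simp add: Q_def)
    qed
    fix j assume j: "j \<in> N" and ij: "i \<noteq> j"
    have iX: "i \<in> X" "j \<in> X" using i j NX by auto
    have comm: "{j,i} = {i,j}" by (rule insert_commute)
    have ps: "p i {i,j} + p j {i,j} = 1" by (rule sc_pair[OF sc iX ij])
    have mT: "menu X {i,j}" using iX by (simp add: menu_def)
    have QT1: "Q {i,j} i j = \<beta> {i,j} i j * p j {i,j}" using ij by (simp add: Q_def)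
    have QT2: "Q {i,j} j i = \<beta> {i,j} i j * p i {i,j}"
      using ij \<beta>sym[OF mT, of i j] by (simp add: Q_def comm)
    show "Q {i,j} j i > 0" if "Q {i,j} i j = 0"
    proof -
      have "p j {i,j} = 0" using that QT1 \<beta>pos[OF iX ij] by simp
      hence "p i {i,j} = 1" using ps by simp
      thus ?thesis using QT2 \<beta>pos[OF iX ij] by simp
    qed
    have QN1: "Q N i j = \<beta> N i j * p j {i,j}" using ij by (simp add: Q_def)
    have QN2: "Q N j i = \<beta> N i j * p i {i,j}" using ij \<beta>sym[OF N i j] by (simp add: Q_def comm)
    show "Q {i,j} i j * Q N j i = Q {i,j} j i * Q N i j"
      unfolding QT1 QT2 QN1 QN2 by (simp add: ac_simps)
  qed
  have stat: "(\<Sum>k\<in>N. p k N * Q N k j) = p j N" if N: "menu X N" and j: "j \<in> N" for N j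
  proof -
    have fN: "finite N" using N finX by (auto simp: menu_def intro: finite_subset)
    have NX: "N \<subseteq> X" using N by (simp add: menu_def)
    have zero: "(\<Sum>k\<in>N-{j}. \<beta> N j k * delta p N k j) = 0"
    proof (cases "N = M")
      case True
      have "(\<Sum>k\<in>N-{j}. \<beta> N j k * delta p N k j) = c * (\<Sum>k\<in>M-{j}. w k j * delta p M k j)"
        using True w j by (simp add: \<beta>_def sum_distrib_left mult.assoc)
      also have "(\<Sum>k\<in>M-{j}. w k j * delta p M k j) = (\<Sum>k\<in>M. w k j * delta p M k j)"
        using sum.remove[OF fM, of j "\<lambda>k. w k j * delta p M k j"] j True by (simp add: delta_diag)
      also have "\<dots> = 0" using wcons j True by simp
      finally show ?thesis by simp
    next
      case NM: False
      show ?thesis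
      proof (cases "card N = 2")
        case True
        have "delta p N k j = 0" if "k \<in> N - {j}" for k
        proof -
          have "N = {k,j}" using card2_eq[OF fN True, of k j] that j by auto
          thus ?thesis by (simp add: delta_def)
        qed
        thus ?thesis by simp
      next
        case False thus ?thesis using NM by (simp add: \<beta>_def)
      qed
    qed
    have A: "(\<Sum>k\<in>N. p k N * Q N k j) = p j N * Q N j j + (\<Sum>k\<in>N-{j}. p k N * Q N k j)"
      using sum.remove[OF fN j] by simp
    have B: "(\<Sum>k\<in>N-{j}. p k N * Q N k j) = (\<Sum>k\<in>N-{j}. \<beta> N j k * (p k N * p j {k,j}))"
      using \<beta>sym[OF N] j by (intro sum.cong) (auto simp: Q_def)
    have C0: "(\<Sum>k\<in>N-{j}. \<beta> N j k * p k {j,k}) = (\<Sum>k\<in>N-{j}. \<beta> N j k * p k {k,j})"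
      by (intro sum.cong) (auto simp: insert_commute)
    have C: "p j N * Q N j j = p j N - (\<Sum>k\<in>N-{j}. \<beta> N j k * (p k {k,j} * p j N))"
    proof -
      have "p j N * Q N j j = p j N - p j N * (\<Sum>k\<in>N-{j}. \<beta> N j k * p k {k,j})"
        by (simp add: Q_def C0 right_diff_distrib)
      also have "p j N * (\<Sum>k\<in>N-{j}. \<beta> N j k * p k {k,j}) = (\<Sum>k\<in>N-{j}. \<beta> N j k * (p k {k,j} * p j N))"
        by (simp add: sum_distrib_left mult_ac)
      finally show ?thesis .
    qed
    have D: "(\<Sum>k\<in>N-{j}. \<beta> N j k * delta p N k j) = (\<Sum>k\<in>N-{j}. \<beta> N j k * (p k N * p j {k,j})) - (\<Sum>k\<in>N-{j}. \<beta> N j k * (p k {k,j} * p j N))"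
      by (simp add: delta_def right_diff_distrib sum_subtractf)
    have "(\<Sum>k\<in>N. p k N * Q N k j) = p j N + (\<Sum>k\<in>N-{j}. \<beta> N j k * delta p N k j)"
      unfolding A B C D by simp
    thus ?thesis using zero by simp
  qed
  have rat: "rationalizes X Q \<nu> p"
    unfolding rationalizes_def
  proof (intro allI impI)
    fix N assume N: "menu X N"
    have fN: "finite N" using N finX by (auto simp: menu_def intro: finite_subset)
    show "rho_is N (\<nu> N) (Q N) (\<lambda>i. p i N)"
      unfolding \<nu>_def by (rule rho_of_stat[OF fN stat[OF N]])
  qed
  have QM: "Q M i j = c * w i j * p j {i,j}" if "i \<noteq> j" for i j
    using that by (simp add: Q_def \<beta>_def)
  have pc: "pairwise_comparable M (Q M)"
    unfolding pairwise_comparable_def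
  proof (intro ballI impI)
    fix i j assume ij: "i \<in> M" "j \<in> M" "i \<noteq> j" and z: "Q M i j = 0"
    have iX: "i \<in> X" "j \<in> X" using ij MX by auto
    have wp: "w i j > 0" "w j i = w i j" using w ij by auto
    hence "p j {i,j} = 0" using z QM[OF ij(3)] c0 by simp
    hence "p i {i,j} = 1" using sc_pair[OF sc iX ij(3)] by simp
    thus "Q M j i > 0" using QM[of j i] ij(3) wp c0 by (simp add: insert_commute)
  qed
  have fc: "fully_comparable M (Q M)" if pos: "\<forall>i\<in>M. \<forall>j\<in>M. p i {i,j} > 0"
    unfolding fully_comparable_def
  proof (intro ballI impI)
    fix i j assume ij: "i \<in> M" "j \<in> M" "i \<noteq> j"
    have "p j {j,i} > 0" using pos ij by blast
    hence "p j {i,j} > 0" by (simp add: insert_commute)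
    moreover have "w i j > 0" using w ij by auto
    ultimately show "Q M i j > 0" using QM[OF ij(3)] c0 by simp
  qed
  show ?thesis using msc rat pc fc by blast
qed



theorem theorem2:
  fixes X :: "'a set" and p :: "'a \<Rightarrow> 'a set \<Rightarrow> real" and M :: "'a set"
  assumes "finite X" and "stoch_choice X p" and "menu X M"
  shows "((\<exists>Q \<nu>. MSC X Q \<nu> \<and> rationalizes X Q \<nu> p \<and> pairwise_comparable M (Q M)) \<longleftrightarrow>
            (\<forall>i\<in>M. \<forall>j\<in>M. i \<noteq> j \<longrightarrow> bounded_in_cycle p M i j))
       \<and> ((\<exists>Q \<nu>. MSC X Q \<nu> \<and> rationalizes X Q \<nu> p \<and> fully_comparable M (Q M)) \<longleftrightarrow>
            ((\<forall>i\<in>M. p i M > 0) \<and> (\<forall>i\<in>M. \<forall>j\<in>M. p i {i, j} > 0) \<and>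
             (\<forall>i\<in>M. \<forall>j\<in>M. i \<noteq> j \<longrightarrow> bounded_in_cycle p M i j)))"
proof (rule conjI; rule iffI)
  assume "\<exists>Q \<nu>. MSC X Q \<nu> \<and> rationalizes X Q \<nu> p \<and> pairwise_comparable M (Q M)"
  then obtain Q \<nu> where h: "MSC X Q \<nu>" "rationalizes X Q \<nu> p" "pairwise_comparable M (Q M)" by auto
  show "\<forall>i\<in>M. \<forall>j\<in>M. i \<noteq> j \<longrightarrow> bounded_in_cycle p M i j"
    by (rule only_if_a[OF assms h])
next
  assume "\<forall>i\<in>M. \<forall>j\<in>M. i \<noteq> j \<longrightarrow> bounded_in_cycle p M i j"
  from construct[OF assms this]
  obtain Q \<nu> where "MSC X Q \<nu>" "rationalizes X Q \<nu> p" "pairwise_comparable M (Q M)" by auto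
  thus "\<exists>Q \<nu>. MSC X Q \<nu> \<and> rationalizes X Q \<nu> p \<and> pairwise_comparable M (Q M)" by (intro exI conjI)
next
  assume "\<exists>Q \<nu>. MSC X Q \<nu> \<and> rationalizes X Q \<nu> p \<and> fully_comparable M (Q M)"
  then obtain Q \<nu> where h: "MSC X Q \<nu>" "rationalizes X Q \<nu> p" "fully_comparable M (Q M)" by auto
  have pc: "pairwise_comparable M (Q M)"
    unfolding pairwise_comparable_def
  proof (intro ballI impI)
    fix i j assume ij: "i \<in> M" "j \<in> M" "i \<noteq> j"
    show "Q M j i > 0" using h(3) ij unfolding fully_comparable_def by simp
  qed
  have b1: "(\<forall>i\<in>M. p i M > 0) \<and> (\<forall>i\<in>M. \<forall>j\<in>M. p i {i, j} > 0)" by (rule only_if_b[OF assms h])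
  have b2: "\<forall>i\<in>M. \<forall>j\<in>M. i \<noteq> j \<longrightarrow> bounded_in_cycle p M i j" by (rule only_if_a[OF assms h(1,2) pc])
  show "(\<forall>i\<in>M. p i M > 0) \<and> (\<forall>i\<in>M. \<forall>j\<in>M. p i {i, j} > 0) \<and>
             (\<forall>i\<in>M. \<forall>j\<in>M. i \<noteq> j \<longrightarrow> bounded_in_cycle p M i j)"
    using conjunct1[OF b1] conjunct2[OF b1] b2 by (intro conjI)
next
  assume r: "(\<forall>i\<in>M. p i M > 0) \<and> (\<forall>i\<in>M. \<forall>j\<in>M. p i {i, j} > 0) \<and>
             (\<forall>i\<in>M. \<forall>j\<in>M. i \<noteq> j \<longrightarrow> bounded_in_cycle p M i j)"
  have bc: "\<forall>i\<in>M. \<forall>j\<in>M. i \<noteq> j \<longrightarrow> bounded_in_cycle p M i j" by (rule conjunct2[OF conjunct2[OF r]])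
  have pos: "\<forall>i\<in>M. \<forall>j\<in>M. p i {i, j} > 0" by (rule conjunct1[OF conjunct2[OF r]])
  obtain Q \<nu> where q: "MSC X Q \<nu>" "rationalizes X Q \<nu> p"
     "(\<forall>i\<in>M. \<forall>j\<in>M. p i {i,j} > 0) \<longrightarrow> fully_comparable M (Q M)"
    using construct[OF assms bc] by auto
  have "fully_comparable M (Q M)" using q(3) pos by (rule mp)
  thus "\<exists>Q \<nu>. MSC X Q \<nu> \<and> rationalizes X Q \<nu> p \<and> fully_comparable M (Q M)" using q(1,2) by (intro exI conjI)
qed


end
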